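(* Let $\mathcal{E}$ be a Banach space of analytic functions on an annulus $\{r<|z|<R\}$ (with $0\le r<R\le\infty$) such that all evaluation functionals are continuous, and suppose $k_n\ne0$ for all $n\in\mathbb{Z}$. If $w=(w_n)_{n\in\mathbb{Z}}$ is a complex sequence such that $B_w$ is a bounded operator on $\mathcal{E}$, then $$\sup_{n\in\mathbb{Z}}\ |w_{n+1}|\frac{\|k_{n+1}\|}{\|k_n\|}<\infty.$$
   Context: For $f\in\mathcal{E}$ with Laurent expansion $f(z)=\sum_{n\in\mathbb{Z}}\widehat f(n)z^n$, $k_n(f)=\widehat f(n)$ is the $n$-th coefficient functional (a continuous linear functional on $\mathcal{E}$), and $\|k_n\|$ is its norm in $\mathcal{E}^*$. $B_w$ acts by $B_w(\sum_n\widehat f(n)z^n)=\sum_nw_n\widehat f(n)z^{n-1}$. *)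

theory Defs
  imports "HOL-Complex_Analysis.Complex_Analysis"
begin

definition annulus :: "real \<Rightarrow> ereal \<Rightarrow> complex set" where
  "annulus r R = {z. r < norm z \<and> ereal (norm z) < R}"

definition mid_radius :: "real \<Rightarrow> ereal \<Rightarrow> real" where
  "mid_radius r R = (SOME \<rho>. r < \<rho> \<and> ereal \<rho> < R)"

text \<open>n-th Laurent coefficient of f, computed on a circle inside the annulus
  (independent of the radius by Cauchy's theorem).\<close>
definition laurent_coeff :: "real \<Rightarrow> ereal \<Rightarrow> (complex \<Rightarrow> complex) \<Rightarrow> int \<Rightarrow> complex" where
  "laurent_coeff r R f n =
     contour_integral (circlepath 0 (mid_radius r R)) (\<lambda>z. f z * z powi (- (n + 1)))
       / (2 * of_real pi * \<i>)"

text \<open>E with norm N is a Banach space of analytic functions on the annulus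
  (functions identified when they agree on the annulus) with continuous
  point evaluations.\<close>
definition banach_space_of_analytic ::
  "real \<Rightarrow> ereal \<Rightarrow> (complex \<Rightarrow> complex) set \<Rightarrow> ((complex \<Rightarrow> complex) \<Rightarrow> real) \<Rightarrow> bool" where
  "banach_space_of_analytic r R E N \<longleftrightarrow>
     (\<forall>f\<in>E. f holomorphic_on annulus r R) \<and>
     (\<lambda>z. 0) \<in> E \<and>
     (\<forall>f\<in>E. \<forall>g\<in>E. (\<lambda>z. f z + g z) \<in> E) \<and>
     (\<forall>f\<in>E. \<forall>c. (\<lambda>z. c * f z) \<in> E) \<and>
     (\<forall>f\<in>E. 0 \<le> N f) \<and>
     (\<forall>f\<in>E. N f = 0 \<longleftrightarrow> (\<forall>z\<in>annulus r R. f z = 0)) \<and>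
     (\<forall>f\<in>E. \<forall>g\<in>E. (\<forall>z\<in>annulus r R. f z = g z) \<longrightarrow> N f = N g) \<and>
     (\<forall>f\<in>E. \<forall>g\<in>E. N (\<lambda>z. f z + g z) \<le> N f + N g) \<and>
     (\<forall>f\<in>E. \<forall>c. N (\<lambda>z. c * f z) = norm c * N f) \<and>
     (\<forall>F. (\<forall>k. F k \<in> E) \<and>
          (\<forall>e>0. \<exists>M. \<forall>m\<ge>M. \<forall>n\<ge>M. N (\<lambda>z. F m z - F n z) < e) \<longrightarrow>
          (\<exists>f\<in>E. (\<lambda>k. N (\<lambda>z. F k z - f z)) \<longlonglongrightarrow> 0)) \<and>
     (\<forall>z\<in>annulus r R. \<exists>C. \<forall>f\<in>E. norm (f z) \<le> C * N f)"

text \<open>Norm of the coefficient functional k_n in the dual of E.\<close>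
definition coeff_functional_norm ::
  "real \<Rightarrow> ereal \<Rightarrow> (complex \<Rightarrow> complex) set \<Rightarrow> ((complex \<Rightarrow> complex) \<Rightarrow> real) \<Rightarrow> int \<Rightarrow> real" where
  "coeff_functional_norm r R E N n =
     Sup {norm (laurent_coeff r R f n) | f. f \<in> E \<and> N f \<le> 1}"

definition bounded_weighted_backward_shift ::
  "real \<Rightarrow> ereal \<Rightarrow> (complex \<Rightarrow> complex) set \<Rightarrow> ((complex \<Rightarrow> complex) \<Rightarrow> real) \<Rightarrow> (int \<Rightarrow> complex) \<Rightarrow> bool" where
  "bounded_weighted_backward_shift r R E N w \<longleftrightarrow>
     (\<exists>T. (\<forall>f\<in>E. T f \<in> E \<and> (\<forall>n. laurent_coeff r R (T f) (n - 1) = w n * laurent_coeff r R f n)) \<and>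
          (\<exists>C. \<forall>f\<in>E. N (T f) \<le> C * N f))"

end

theory Submission
  imports Defs
begin

locale bsa =
  fixes r :: real and R :: ereal and E :: "(complex \<Rightarrow> complex) set"
    and N :: "(complex \<Rightarrow> complex) \<Rightarrow> real"
  assumes r0: "0 \<le> r" and rR: "ereal r < R"
    and B: "banach_space_of_analytic r R E N"
begin

lemma hol: "f \<in> E \<Longrightarrow> f holomorphic_on annulus r R"
  and zeroE: "(\<lambda>z. 0) \<in> E"
  and addE: "f \<in> E \<Longrightarrow> g \<in> E \<Longrightarrow> (\<lambda>z. f z + g z) \<in> E"
  and smulE: "f \<in> E \<Longrightarrow> (\<lambda>z. c * f z) \<in> E"
  and Nnn: "f \<in> E \<Longrightarrow> 0 \<le> N f"
  and N0: "f \<in> E \<Longrightarrow> N f = 0 \<longleftrightarrow> (\<forall>z\<in>annulus r R. f z = 0)"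
  and Ncong: "f \<in> E \<Longrightarrow> g \<in> E \<Longrightarrow> (\<forall>z\<in>annulus r R. f z = g z) \<Longrightarrow> N f = N g"
  and Ntri0: "f \<in> E \<Longrightarrow> g \<in> E \<Longrightarrow> N (\<lambda>z. f z + g z) \<le> N f + N g"
  and Nhom: "f \<in> E \<Longrightarrow> N (\<lambda>z. c * f z) = norm c * N f"
  and compl: "(\<forall>k. F k \<in> E) \<Longrightarrow>
          (\<forall>e>0. \<exists>M. \<forall>m\<ge>M. \<forall>n\<ge>M. N (\<lambda>z. F m z - F n z) < e) \<Longrightarrow>
          (\<exists>f\<in>E. (\<lambda>k. N (\<lambda>z. F k z - f z)) \<longlonglongrightarrow> 0)"
  and evb: "z\<in>annulus r R \<Longrightarrow> \<exists>C. \<forall>f\<in>E. norm (f z) \<le> C * N f"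
  using B unfolding banach_space_of_analytic_def by blast+

lemma diffE: "f \<in> E \<Longrightarrow> g \<in> E \<Longrightarrow> (\<lambda>z. f z - g z) \<in> E"
proof -
  assume "f \<in> E" "g \<in> E"
  then have "(\<lambda>z. f z + (-1) * g z) \<in> E" using addE smulE by blast
  then show ?thesis by simp
qed

lemma Nsym: "f \<in> E \<Longrightarrow> g \<in> E \<Longrightarrow> N (\<lambda>z. f z - g z) = N (\<lambda>z. g z - f z)"
proof -
  assume "f \<in> E" "g \<in> E"
  then have "N (\<lambda>z. (-1) * (g z - f z)) = N (\<lambda>z. g z - f z)"
    using Nhom[of "\<lambda>z. g z - f z" "-1"] diffE by simp
  then show ?thesis by simp
qed

lemma Ntri: "a \<in> E \<Longrightarrow> b \<in> E \<Longrightarrow> c \<in> E \<Longrightarrow>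
   N (\<lambda>z. a z - c z) \<le> N (\<lambda>z. a z - b z) + N (\<lambda>z. b z - c z)"
proof -
  assume "a \<in> E" "b \<in> E" "c \<in> E"
  then have "N (\<lambda>z. (a z - b z) + (b z - c z)) \<le> N (\<lambda>z. a z - b z) + N (\<lambda>z. b z - c z)"
    using Ntri0 diffE by blast
  then show ?thesis by simp
qed

lemma Nzero: "N (\<lambda>z. 0) = 0"
  using N0 zeroE by simp

lemma Nself: "N (\<lambda>z. f z - f z) = 0"
  using Nzero by simp

lemma Cz: "z \<in> annulus r R \<Longrightarrow> \<exists>C>0. \<forall>f\<in>E. norm (f z) \<le> C * N f"
proof -
  assume "z \<in> annulus r R"
  then obtain C where C: "\<forall>f\<in>E. norm (f z) \<le> C * N f" using evb by blast
  have "\<forall>f\<in>E. norm (f z) \<le> max C 1 * N f"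
  proof
    fix f assume "f \<in> E"
    then have "C * N f \<le> max C 1 * N f" using Nnn by (simp add: mult_right_mono)
    then show "norm (f z) \<le> max C 1 * N f" using C \<open>f \<in> E\<close> by force
  qed
  then show ?thesis by (intro exI[of _ "max C 1"]) auto
qed

definition "\<rho> = mid_radius r R"

lemma rho: "r < \<rho>" "ereal \<rho> < R"
proof -
  have "\<exists>x. r < x \<and> ereal x < R" using ereal_dense2[OF rR] by auto
  then have "r < \<rho> \<and> ereal \<rho> < R" unfolding \<rho>_def mid_radius_def by (rule someI_ex)
  then show "r < \<rho>" "ereal \<rho> < R" by auto
qed

lemma rho_pos: "0 < \<rho>" using rho r0 by linarith

lemma sphere_ann: "norm z = \<rho> \<Longrightarrow> z \<in> annulus r R"
  using rho unfolding annulus_def by auto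


lemma baire_ex:
  "\<exists>m f0 \<delta>. f0 \<in> E \<and> \<delta> > 0 \<and>
     (\<forall>g\<in>E. N (\<lambda>x. g x - f0 x) < \<delta> \<longrightarrow> (\<forall>z. norm z = \<rho> \<longrightarrow> norm (g z) \<le> m))"
proof (rule ccontr)
  assume neg: "\<not> ?thesis"
  have nb: "\<exists>g\<in>E. \<exists>z. norm z = \<rho> \<and> N (\<lambda>x. g x - f0 x) < \<delta> \<and> norm (g z) > m"
    if f0d: "f0 \<in> E" "\<delta> > 0" for m f0 \<delta>
  proof (rule ccontr)
    assume "\<not> (\<exists>g\<in>E. \<exists>z. norm z = \<rho> \<and> N (\<lambda>x. g x - f0 x) < \<delta> \<and> norm (g z) > m)"
    then have "\<forall>g\<in>E. N (\<lambda>x. g x - f0 x) < \<delta> \<longrightarrow> (\<forall>z. norm z = \<rho> \<longrightarrow> norm (g z) \<le> m)"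
      by (auto simp: not_less)
    then show False using neg f0d by blast
  qed
  define Cz where "Cz z = (SOME C. C > 0 \<and> (\<forall>f\<in>E. norm (f z) \<le> C * N f))" for z
  have Czp: "Cz z > 0 \<and> (\<forall>f\<in>E. norm (f z) \<le> Cz z * N f)" if "norm z = \<rho>" for z
  proof -
    have "\<exists>C. C > 0 \<and> (\<forall>f\<in>E. norm (f z) \<le> C * N f)" using Cz[OF sphere_ann[OF that]] .
    then show ?thesis unfolding Cz_def by (rule someI_ex)
  qed
  define pick where "pick g \<delta> k = (SOME p. fst p \<in> E \<and> norm (snd p) = \<rho> \<and>
      N (\<lambda>x. fst p x - g x) < \<delta> \<and> norm (fst p (snd p)) > real k + 1)"
    for g :: "complex \<Rightarrow> complex" and \<delta> :: real and k :: nat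
  have pickp: "fst (pick g \<delta> k) \<in> E \<and> norm (snd (pick g \<delta> k)) = \<rho> \<and>
      N (\<lambda>x. fst (pick g \<delta> k) x - g x) < \<delta> \<and> norm (fst (pick g \<delta> k) (snd (pick g \<delta> k))) > real k + 1"
    if gd: "g \<in> E" "\<delta> > 0" for g \<delta> k
  proof -
    obtain g' z where "g' \<in> E" "norm z = \<rho>" "N (\<lambda>x. g' x - g x) < \<delta>" "norm (g' z) > real k + 1"
      using nb[OF gd, of "real k + 1"] by blast
    let ?P = "\<lambda>p. fst p \<in> E \<and> norm (snd p) = \<rho> \<and>
      N (\<lambda>x. fst p x - g x) < \<delta> \<and> norm (fst p (snd p)) > real k + 1"
    have "?P (g', z)" using \<open>g' \<in> E\<close> \<open>norm z = \<rho>\<close> \<open>N (\<lambda>x. g' x - g x) < \<delta>\<close> \<open>norm (g' z) > real k + 1\<close> by simp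
    then have "?P (SOME p. ?P p)" by (rule someI)
    then show ?thesis unfolding pick_def by simp
  qed
  define st where "st = rec_nat ((\<lambda>z::complex. 0::complex), 1::real, complex_of_real \<rho>)
     (\<lambda>k s. (fst (pick (fst s) (fst (snd s)) k),
             min (fst (snd s) / 2) (1 / (2 * Cz (snd (pick (fst s) (fst (snd s)) k)))),
             snd (pick (fst s) (fst (snd s)) k)))"
  define G where "G k = fst (st k)" for k
  define D where "D k = fst (snd (st k))" for k
  define Z where "Z k = snd (snd (st k))" for k
  have G0: "G 0 = (\<lambda>z. 0)" and D0: "D 0 = 1" unfolding G_def D_def st_def by simp_all
  have GS: "G (Suc k) = fst (pick (G k) (D k) k)"
    and ZS: "Z (Suc k) = snd (pick (G k) (D k) k)"
    and DS: "D (Suc k) = min (D k / 2) (1 / (2 * Cz (Z (Suc k))))" for k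
    unfolding G_def D_def Z_def st_def by simp_all
  have inv: "G k \<in> E \<and> D k > 0" for k
  proof (induction k)
    case 0 then show ?case using G0 D0 zeroE by simp
  next
    case (Suc k)
    then have p: "fst (pick (G k) (D k) k) \<in> E" "norm (snd (pick (G k) (D k) k)) = \<rho>"
      using pickp by blast+
    then have "Cz (Z (Suc k)) > 0" using Czp ZS by simp
    then show ?case using p Suc GS DS by simp
  qed
  have GE: "G k \<in> E" for k using inv by blast
  have P2: "D (Suc k) \<le> D k / 2" for k using DS by simp
  have P3: "N (\<lambda>x. G (Suc k) x - G k x) < D k" for k
    using pickp[of "G k" "D k" k] inv GS by simp
  have P4: "norm (Z (Suc k)) = \<rho>" "norm (G (Suc k) (Z (Suc k))) > real k + 1" for k
    using pickp[of "G k" "D k" k] inv GS ZS by simp_all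
  have P5: "2 * Cz (Z (Suc k)) * D (Suc k) \<le> 1" for k
  proof -
    have "Cz (Z (Suc k)) > 0" using Czp[OF P4(1)] by blast
    moreover have "D (Suc k) \<le> 1 / (2 * Cz (Z (Suc k)))" using DS by simp
    ultimately show ?thesis by (simp add: field_simps)
  qed
  have Dmono: "D j \<le> D k" if "k \<le> j" for j k
    using that
  proof (induction j rule: dec_induct)
    case base then show ?case by simp
  next
    case (step j) then show ?case using P2[of j] inv[of j] by linarith
  qed
  have Dgeom: "D k \<le> (1/2) ^ k" for k
  proof (induction k)
    case 0 then show ?case using D0 by simp
  next
    case (Suc k) then show ?case using P2[of k] by simp
  qed
  have Cb: "N (\<lambda>x. G j x - G k x) \<le> 2 * D k - 2 * D j" if "k \<le> j" for j k
    using that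
  proof (induction j rule: dec_induct)
    case base then show ?case using Nself by simp
  next
    case (step j)
    have "N (\<lambda>x. G (Suc j) x - G k x) \<le> N (\<lambda>x. G (Suc j) x - G j x) + N (\<lambda>x. G j x - G k x)"
      using Ntri[OF GE GE GE] .
    then show ?case using step P3[of j] P2[of j] by linarith
  qed
  have Cb2: "N (\<lambda>x. G j x - G k x) \<le> 2 * D M" if "M \<le> j" "M \<le> k" for j k M
  proof (cases "k \<le> j")
    case True
    then show ?thesis using Cb[OF True] inv[of j] Dmono[OF \<open>M \<le> k\<close>] by linarith
  next
    case False
    then have "j \<le> k" by simp
    have "N (\<lambda>x. G j x - G k x) = N (\<lambda>x. G k x - G j x)" using Nsym[OF GE GE] .
    then show ?thesis using Cb[OF \<open>j \<le> k\<close>] inv[of k] Dmono[OF \<open>M \<le> j\<close>] by linarith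
  qed
  have cauchy: "\<forall>e>0. \<exists>M. \<forall>m\<ge>M. \<forall>n\<ge>M. N (\<lambda>z. G m z - G n z) < e"
  proof (intro allI impI)
    fix e :: real assume "e > 0"
    then obtain M where M: "(1/2::real) ^ M < e / 2" using real_arch_pow_inv[of "e/2" "1/2"] by auto
    show "\<exists>M. \<forall>m\<ge>M. \<forall>n\<ge>M. N (\<lambda>z. G m z - G n z) < e"
    proof (intro exI[of _ M] allI impI)
      fix m n assume "M \<le> m" "M \<le> n"
      then have "N (\<lambda>z. G m z - G n z) \<le> 2 * D M" by (rule Cb2)
      then show "N (\<lambda>z. G m z - G n z) < e" using Dgeom[of M] M by linarith
    qed
  qed
  then obtain f where f: "f \<in> E" "(\<lambda>k. N (\<lambda>z. G k z - f z)) \<longlonglongrightarrow> 0"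
    using compl[of G] GE by blast
  have fb: "N (\<lambda>x. f x - G k x) \<le> 2 * D k" for k
  proof -
    have lim1: "(\<lambda>j. N (\<lambda>z. G j z - f z) + 2 * D k) \<longlonglongrightarrow> 0 + 2 * D k"
      by (intro tendsto_intros f)
    have all1: "\<forall>j\<ge>k. N (\<lambda>x. f x - G k x) \<le> N (\<lambda>z. G j z - f z) + 2 * D k"
    proof (intro allI impI)
      fix j assume "k \<le> j"
      have "N (\<lambda>x. f x - G k x) \<le> N (\<lambda>x. f x - G j x) + N (\<lambda>x. G j x - G k x)"
        using Ntri[OF f(1) GE GE] .
      moreover have "N (\<lambda>x. f x - G j x) = N (\<lambda>z. G j z - f z)" using Nsym[OF f(1) GE] .
      ultimately show "N (\<lambda>x. f x - G k x) \<le> N (\<lambda>z. G j z - f z) + 2 * D k"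
        using Cb[OF \<open>k \<le> j\<close>] inv[of j] by linarith
    qed
    have "N (\<lambda>x. f x - G k x) \<le> 0 + 2 * D k"
      using LIMSEQ_le_const[OF lim1, of "N (\<lambda>x. f x - G k x)"] all1 by blast
    then show ?thesis by simp
  qed
  have big: "norm (f (Z (Suc k))) > real k" for k
  proof -
    let ?z = "Z (Suc k)"
    have "norm (G (Suc k) ?z - f ?z) \<le> Cz ?z * N (\<lambda>x. G (Suc k) x - f x)"
      using bspec[OF conjunct2[OF Czp[OF P4(1)[of k]]] diffE[OF GE[of "Suc k"] f(1)]] by simp
    also have "\<dots> = Cz ?z * N (\<lambda>x. f x - G (Suc k) x)" using Nsym[OF GE f(1)] by simp
    also have "\<dots> \<le> Cz ?z * (2 * D (Suc k))"
      using fb Czp[OF P4(1)[of k]] by (intro mult_left_mono) auto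
    also have "\<dots> \<le> 1" using P5[of k] by simp
    finally have "norm (G (Suc k) ?z - f ?z) \<le> 1" .
    moreover have "norm (G (Suc k) ?z) \<le> norm (G (Suc k) ?z - f ?z) + norm (f ?z)"
      by (metis diff_add_cancel norm_triangle_ineq)
    ultimately show ?thesis using P4(2)[of k] by linarith
  qed
  have "continuous_on (annulus r R) f" using hol f holomorphic_on_imp_continuous_on by blast
  moreover have "sphere 0 \<rho> \<subseteq> annulus r R" using sphere_ann by auto
  ultimately have "continuous_on (sphere 0 \<rho>) f" using continuous_on_subset by blast
  then have "compact (f ` sphere 0 \<rho>)" by (intro compact_continuous_image) auto
  then obtain Bd where Bd: "\<forall>y\<in>f ` sphere 0 \<rho>. norm y \<le> Bd"
    using compact_imp_bounded bounded_iff by metis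
  obtain k :: nat where "Bd < real k" using reals_Archimedean2 by blast
  moreover have "norm (f (Z (Suc k))) \<le> Bd" using Bd P4(1)[of k] by auto
  ultimately show False using big[of k] by linarith
qed

lemma unif: "\<exists>K. \<forall>h\<in>E. \<forall>z. norm z = \<rho> \<longrightarrow> norm (h z) \<le> K * N h"
proof -
  obtain m f0 \<delta> where f0: "f0 \<in> E" "\<delta> > 0"
    and H: "\<And>g z. g\<in>E \<Longrightarrow> N (\<lambda>x. g x - f0 x) < \<delta> \<Longrightarrow> norm z = \<rho> \<Longrightarrow> norm (g z) \<le> m"
    using baire_ex by blast
  have "\<forall>h\<in>E. \<forall>z. norm z = \<rho> \<longrightarrow> norm (h z) \<le> (4 * m / \<delta>) * N h"
  proof (intro ballI allI impI)
    fix h and z :: complex assume h: "h \<in> E" and z: "norm z = \<rho>"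
    have f0z: "norm (f0 z) \<le> m" using H[OF f0(1) _ z] Nself f0 by simp
    show "norm (h z) \<le> (4 * m / \<delta>) * N h"
    proof (cases "N h = 0")
      case True
      then have "h z = 0" using N0 h sphere_ann z by blast
      then show ?thesis using True by simp
    next
      case False
      then have Nh: "N h > 0" using Nnn h by force
      define c where "c = \<delta> / (2 * N h)"
      have c: "c > 0" using Nh f0 unfolding c_def by simp
      have gE: "(\<lambda>x. f0 x + complex_of_real c * h x) \<in> E" using addE smulE f0 h by blast
      have "N (\<lambda>x. (f0 x + complex_of_real c * h x) - f0 x) = N (\<lambda>x. complex_of_real c * h x)"
        by simp
      also have "\<dots> = c * N h" using Nhom h c by simp
      also have "\<dots> = \<delta> / 2" using Nh unfolding c_def by simp
      finally have "norm (f0 z + complex_of_real c * h z) \<le> m"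
        using H[OF gE _ z] f0 by simp
      moreover have "norm (complex_of_real c * h z) \<le> norm (f0 z + complex_of_real c * h z) + norm (f0 z)"
        by (metis add_diff_cancel_left' norm_triangle_ineq4 )
      ultimately have "c * norm (h z) \<le> 2 * m" using f0z c by (simp add: norm_mult)
      then have "norm (h z) \<le> 2 * m / c" using c by (simp add: field_simps)
      also have "2 * m / c = (4 * m / \<delta>) * N h" unfolding c_def using f0 Nh by (simp add: field_simps)
      finally show ?thesis .
    qed
  qed
  then show ?thesis by blast
qed


lemma lc_def: "laurent_coeff r R f n =
   contour_integral (circlepath 0 \<rho>) (\<lambda>z. f z * z powi (- (n + 1))) / (2 * of_real pi * \<i>)"
  unfolding laurent_coeff_def \<rho>_def ..

lemma cont_sphere: "f \<in> E \<Longrightarrow> continuous_on (sphere 0 \<rho>) f"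
proof -
  assume "f \<in> E"
  then have "continuous_on (annulus r R) f" using hol holomorphic_on_imp_continuous_on by blast
  moreover have "sphere 0 \<rho> \<subseteq> annulus r R" using sphere_ann by auto
  ultimately show ?thesis using continuous_on_subset by blast
qed

lemma integrable: "f \<in> E \<Longrightarrow> (\<lambda>z. f z * z powi k) contour_integrable_on circlepath 0 \<rho>"
proof -
  assume f: "f \<in> E"
  have "0 \<notin> sphere (0::complex) \<rho>" using rho_pos by simp
  then have "continuous_on (sphere 0 \<rho>) (\<lambda>z::complex. z powi k)"
    by (intro continuous_intros) auto
  then have "continuous_on (sphere 0 \<rho>) (\<lambda>z. f z * z powi k)"
    using cont_sphere[OF f] by (intro continuous_on_mult)
  then show ?thesis
    using rho_pos by (intro contour_integrable_continuous_circlepath) (simp add: path_image_circlepath)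
qed

lemma coeff_smul: "f \<in> E \<Longrightarrow> laurent_coeff r R (\<lambda>z. c * f z) n = c * laurent_coeff r R f n"
proof -
  assume f: "f \<in> E"
  have "contour_integral (circlepath 0 \<rho>) (\<lambda>z. c * (f z * z powi (- (n + 1))))
      = c * contour_integral (circlepath 0 \<rho>) (\<lambda>z. f z * z powi (- (n + 1)))"
    by (rule contour_integral_lmul[OF integrable[OF f]])
  then show ?thesis unfolding lc_def by (simp add: mult.assoc)
qed

lemma coeff_bound: "\<exists>C\<ge>0. \<forall>f\<in>E. norm (laurent_coeff r R f n) \<le> C * N f"
proof -
  obtain K0 where K0: "\<forall>h\<in>E. \<forall>z. norm z = \<rho> \<longrightarrow> norm (h z) \<le> K0 * N h" using unif by blast
  define K where "K = max K0 0"
  have K: "\<forall>h\<in>E. \<forall>z. norm z = \<rho> \<longrightarrow> norm (h z) \<le> K * N h" "K \<ge> 0"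
  proof -
    show "K \<ge> 0" unfolding K_def by simp
    show "\<forall>h\<in>E. \<forall>z. norm z = \<rho> \<longrightarrow> norm (h z) \<le> K * N h"
    proof (intro ballI allI impI)
      fix h and z :: complex assume "h \<in> E" "norm z = \<rho>"
      then have "norm (h z) \<le> K0 * N h" "K0 * N h \<le> K * N h"
        using K0 Nnn unfolding K_def by (auto intro: mult_right_mono)
      then show "norm (h z) \<le> K * N h" by linarith
    qed
  qed
  define C where "C = K * \<rho> powi (- (n + 1)) * \<rho>"
  have "norm (laurent_coeff r R f n) \<le> C * N f" if f: "f \<in> E" for f
  proof -
    let ?I = "contour_integral (circlepath 0 \<rho>) (\<lambda>z. f z * z powi (- (n + 1)))"
    have hi: "((\<lambda>z. f z * z powi (- (n + 1))) has_contour_integral ?I) (circlepath 0 \<rho>)"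
      using has_contour_integral_integral[OF integrable[OF f]] .
    have "norm ?I \<le> (K * N f * \<rho> powi (- (n + 1))) * (2 * pi * \<rho>)"
    proof (rule has_contour_integral_bound_circlepath[OF hi])
      show "0 \<le> K * N f * \<rho> powi (- (n + 1))" using K(2) Nnn[OF f] rho_pos by simp
      show "0 < \<rho>" by (rule rho_pos)
      fix x :: complex assume "norm (x - 0) = \<rho>"
      then have x: "norm x = \<rho>" by simp
      have "norm (f x * x powi (- (n + 1))) = norm (f x) * \<rho> powi (- (n + 1))"
        by (simp add: norm_mult norm_power_int x)
      also have "\<dots> \<le> K * N f * \<rho> powi (- (n + 1))"
        using K(1) f x rho_pos by (intro mult_right_mono) auto
      finally show "norm (f x * x powi (- (n + 1))) \<le> K * N f * \<rho> powi (- (n + 1))" .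
    qed
    moreover have "norm (laurent_coeff r R f n) = norm ?I / (2 * pi)"
      unfolding lc_def by (simp add: norm_divide norm_mult)
    ultimately have "2 * pi * norm (laurent_coeff r R f n) \<le> 2 * pi * (C * N f)"
      unfolding C_def by (simp add: algebra_simps)
    then show ?thesis by (simp add: mult_le_cancel_left_pos)
  qed
  moreover have "C \<ge> 0" unfolding C_def using K(2) rho_pos by simp
  ultimately show ?thesis by blast
qed


abbreviation "Kn n \<equiv> coeff_functional_norm r R E N n"

lemma S_props: "bdd_above {norm (laurent_coeff r R f n) | f. f \<in> E \<and> N f \<le> 1}"
  "{norm (laurent_coeff r R f n) | f. f \<in> E \<and> N f \<le> 1} \<noteq> {}"
proof -
  obtain C where C: "C \<ge> 0" "\<forall>f\<in>E. norm (laurent_coeff r R f n) \<le> C * N f"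
    using coeff_bound by blast
  show "bdd_above {norm (laurent_coeff r R f n) | f. f \<in> E \<and> N f \<le> 1}"
  proof (rule bdd_aboveI)
    fix x assume "x \<in> {norm (laurent_coeff r R f n) | f. f \<in> E \<and> N f \<le> 1}"
    then obtain f where f: "f \<in> E" "N f \<le> 1" "x = norm (laurent_coeff r R f n)" by blast
    then have "x \<le> C * N f" using C by blast
    also have "\<dots> \<le> C" using C(1) f(2) by (simp add: mult_left_le)
    finally show "x \<le> C" .
  qed
  show "{norm (laurent_coeff r R f n) | f. f \<in> E \<and> N f \<le> 1} \<noteq> {}"
    using zeroE Nzero by fastforce
qed

lemma Kn_upper: "f \<in> E \<Longrightarrow> N f \<le> 1 \<Longrightarrow> norm (laurent_coeff r R f n) \<le> Kn n"
  unfolding coeff_functional_norm_def by (rule cSup_upper[OF _ S_props(1)]) blast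

lemma Kn_nonneg: "0 \<le> Kn n"
proof -
  have "norm (laurent_coeff r R (\<lambda>z. 0) n) \<le> Kn n" using Kn_upper[OF zeroE] Nzero by simp
  then show ?thesis using norm_ge_zero order_trans by blast
qed

lemma scaled: "g \<in> E \<Longrightarrow> 0 \<le> t \<Longrightarrow> t * N g \<le> 1 \<Longrightarrow> t * norm (laurent_coeff r R g n) \<le> Kn n"
proof -
  assume g: "g \<in> E" and t: "0 \<le> t" "t * N g \<le> 1"
  have E1: "(\<lambda>z. complex_of_real t * g z) \<in> E" using smulE g by blast
  have "N (\<lambda>z. complex_of_real t * g z) = t * N g" using Nhom[OF g] t by simp
  then have "norm (laurent_coeff r R (\<lambda>z. complex_of_real t * g z) n) \<le> Kn n"
    using Kn_upper[OF E1] t by simp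
  then show ?thesis using coeff_smul[OF g] t by (simp add: norm_mult)
qed

lemma dual: "g \<in> E \<Longrightarrow> norm (laurent_coeff r R g n) \<le> Kn n * N g"
proof -
  assume g: "g \<in> E"
  show ?thesis
  proof (cases "N g = 0")
    case True
    show ?thesis
    proof (rule ccontr)
      assume "\<not> ?thesis"
      then have pos: "norm (laurent_coeff r R g n) > 0" using True by simp
      define t where "t = (Kn n + 1) / norm (laurent_coeff r R g n)"
      have "t \<ge> 0" unfolding t_def using Kn_nonneg pos by simp
      then have "t * norm (laurent_coeff r R g n) \<le> Kn n" using scaled[OF g] True by simp
      moreover have "t * norm (laurent_coeff r R g n) = Kn n + 1" unfolding t_def using pos by simp
      ultimately show False by simp
    qed
  next
    case False
    then have Ng: "N g > 0" using Nnn[OF g] by simp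
    have "(1 / N g) * norm (laurent_coeff r R g n) \<le> Kn n" using scaled[OF g, of "1 / N g"] Ng by simp
    then show ?thesis using Ng by (simp add: field_simps)
  qed
qed

lemma main:
  assumes "bounded_weighted_backward_shift r R E N w"
  shows "bdd_above (range (\<lambda>n. norm (w (n + 1)) * Kn (n + 1) / Kn n))"
proof -
  obtain T C where T: "\<And>f. f \<in> E \<Longrightarrow> T f \<in> E"
    "\<And>f n. f \<in> E \<Longrightarrow> laurent_coeff r R (T f) (n - 1) = w n * laurent_coeff r R f n"
    and C: "\<And>f. f \<in> E \<Longrightarrow> N (T f) \<le> C * N f"
    using assms unfolding bounded_weighted_backward_shift_def by blast
  define C' where "C' = max C 0"
  have key: "norm (w (n + 1)) * Kn (n + 1) \<le> C' * Kn n" for n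
  proof -
    have pt: "norm (w (n + 1)) * norm (laurent_coeff r R f (n + 1)) \<le> C' * Kn n"
      if f: "f \<in> E" "N f \<le> 1" for f
    proof -
      have "norm (w (n + 1)) * norm (laurent_coeff r R f (n + 1)) = norm (laurent_coeff r R (T f) n)"
        using T(2)[OF f(1), of "n + 1"] by (simp add: norm_mult)
      also have "\<dots> \<le> Kn n * N (T f)" by (rule dual[OF T(1)[OF f(1)]])
      also have "\<dots> \<le> Kn n * C'"
      proof (rule mult_left_mono[OF _ Kn_nonneg])
        have "C * N f \<le> C' * N f" unfolding C'_def using Nnn[OF f(1)] by (simp add: mult_right_mono)
        also have "\<dots> \<le> C'" unfolding C'_def using f(2) Nnn[OF f(1)] by (simp add: mult_left_le)
        finally show "N (T f) \<le> C'" using C[OF f(1)] by linarith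
      qed
      finally show ?thesis by (simp add: mult.commute)
    qed
    show ?thesis
    proof (cases "w (n + 1) = 0")
      case True
      then show ?thesis unfolding C'_def using Kn_nonneg by simp
    next
      case False
      then have wp: "norm (w (n + 1)) > 0" by simp
      have "Kn (n + 1) \<le> C' * Kn n / norm (w (n + 1))"
        unfolding coeff_functional_norm_def[of r R E N "n + 1"]
      proof (rule cSup_least[OF S_props(2)])
        fix x assume "x \<in> {norm (laurent_coeff r R f (n + 1)) | f. f \<in> E \<and> N f \<le> 1}"
        then obtain f where "f \<in> E" "N f \<le> 1" "x = norm (laurent_coeff r R f (n + 1))" by blast
        then show "x \<le> C' * Kn n / norm (w (n + 1))" using pt wp by (simp add: field_simps)
      qed
      then show ?thesis using wp by (simp add: field_simps)
    qed
  qed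
  show ?thesis
  proof (rule bdd_aboveI2)
    fix n
    show "norm (w (n + 1)) * Kn (n + 1) / Kn n \<le> C'"
    proof (cases "Kn n = 0")
      case True then show ?thesis unfolding C'_def by simp
    next
      case False
      then have "Kn n > 0" using Kn_nonneg[of n] by simp
      then show ?thesis using key[of n] by (simp add: field_simps)
    qed
  qed
qed

end

theorem proposition3p4:
  fixes r :: real and R :: ereal
    and E :: "(complex \<Rightarrow> complex) set" and N :: "(complex \<Rightarrow> complex) \<Rightarrow> real"
    and w :: "int \<Rightarrow> complex"
  assumes "0 \<le> r" and "ereal r < R"
    and "banach_space_of_analytic r R E N"
    and "\<forall>n. \<exists>f\<in>E. laurent_coeff r R f n \<noteq> 0"
    and "bounded_weighted_backward_shift r R E N w"
  shows "bdd_above (range (\<lambda>n. norm (w (n + 1)) *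
            coeff_functional_norm r R E N (n + 1) / coeff_functional_norm r R E N n))"
proof -
  interpret bsa r R E N using assms(1-3) by unfold_locales
  show ?thesis using main[OF assms(5)] .
qed

end
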